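(* Let $\mathfrak n=W\oplus\mathfrak z$ be a finite-dimensional 2-step nilpotent Lie algebra over a field of characteristic zero which is of TST type and satisfies $(\Lambda^2\mathfrak n)^{\mathfrak n}=\Lambda^2\mathfrak z$. Then every Lie bialgebra cobracket $\delta$ on $\mathfrak n$ satisfies $\delta(\mathfrak z)\subseteq\Lambda^2\mathfrak z$ and $\delta(W)\subseteq (W\wedge\mathfrak z)\oplus\Lambda^2\mathfrak z$.
   Context: $\mathfrak z$ is the center of $\mathfrak n$ and $W$ a fixed linear complement. Fix a basis $z_1,\dots,z_m$ of $\mathfrak z$ and define $T_i:W\to W^*$ by $[v,w]=\sum_iT_i(v)(w)z_i$ ($v,w\in W$). $\mathfrak n$ is of TST type if the only linear map $S:W^*\to W$ with $T_iST_k+T_kST_i=0$ for all $i,k$ is $S=0$. $(\Lambda^2\mathfrak n)^{\mathfrak n}$ denotes the invariants of $\Lambda^2\mathfrak n$ under the adjoint action $\mathrm{ad}_x(a\wedge b)=[x,a]\wedge b+a\wedge[x,b]$. A Lie bialgebra cobracket is a linear $\delta:\mathfrak n\to\Lambda^2\mathfrak n$ satisfying co-Jacobi ($\delta(x_1)\wedge x_2-x_1\wedge\delta(x_2)=0$ where $\delta(x)=x_1\wedge x_2$) and $\delta[x,y]=[\delta x,y]+[x,\delta y]$. *)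

theory Defs
  imports Main "HOL-Library.Function_Algebras"
begin

text \<open>
The Lie algebra n is k^B for a finite basis index type 'b, with basis
vectors e_b.  A subset Z of indices spans the subspace z (basis z_i = e_i, i in Z) and the
complementary indices span W.  The bracket is given by structure constants C:
[e_a, e_b] = sum_c C a b c e_c.  An element A of the exterior square is represented by its
antisymmetric coefficient array, A = sum_{i,j} A i j (e_i tensor e_j), so that
(x wedge y) i j = x i * y j - x j * y i.
\<close>

type_synonym ('b,'k) vec = "'b \<Rightarrow> 'k"
type_synonym ('b,'k) vec2 = "'b \<Rightarrow> 'b \<Rightarrow> 'k"
type_synonym ('b,'k) vec3 = "'b \<Rightarrow> 'b \<Rightarrow> 'b \<Rightarrow> 'k"

definition ebas :: "'b \<Rightarrow> ('b,'k::zero_neq_one) vec" where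
  "ebas b = (\<lambda>c. if c = b then 1 else 0)"

definition br :: "('b,'k) vec3 \<Rightarrow> ('b::finite,'k::comm_ring_1) vec \<Rightarrow> ('b,'k) vec \<Rightarrow> ('b,'k) vec" where
  "br C x y = (\<lambda>c. \<Sum>a\<in>UNIV. \<Sum>b\<in>UNIV. x a * y b * C a b c)"

definition is_lie :: "('b::finite,'k::comm_ring_1) vec3 \<Rightarrow> bool" where
  "is_lie C \<longleftrightarrow> (\<forall>x. br C x x = 0) \<and>
     (\<forall>x y z. br C x (br C y z) + br C y (br C z x) + br C z (br C x y) = 0)"

definition zsp :: "'b set \<Rightarrow> ('b,'k::zero) vec set" where
  "zsp Z = {x. \<forall>i. i \<notin> Z \<longrightarrow> x i = 0}"

definition Wsp :: "'b set \<Rightarrow> ('b,'k::zero) vec set" where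
  "Wsp Z = {x. \<forall>i. i \<in> Z \<longrightarrow> x i = 0}"

definition center :: "('b::finite,'k::comm_ring_1) vec3 \<Rightarrow> ('b,'k) vec set" where
  "center C = {x. \<forall>y. br C x y = 0}"

definition two_step :: "('b::finite,'k::comm_ring_1) vec3 \<Rightarrow> bool" where
  "two_step C \<longleftrightarrow> (\<forall>x y w. br C (br C x y) w = 0) \<and> (\<exists>x y. br C x y \<noteq> 0)"

definition Lam2 :: "('b,'k::ab_group_add) vec2 set" where
  "Lam2 = {A. \<forall>i j. A i j = - A j i}"

definition Lam2z :: "'b set \<Rightarrow> ('b,'k::ab_group_add) vec2 set" where
  "Lam2z Z = {A \<in> Lam2. \<forall>i j. i \<notin> Z \<or> j \<notin> Z \<longrightarrow> A i j = 0}"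

text \<open>(W wedge z) + Lambda^2 z: no W wedge W component.\<close>
definition WZ_Lam2z :: "'b set \<Rightarrow> ('b,'k::ab_group_add) vec2 set" where
  "WZ_Lam2z Z = {A \<in> Lam2. \<forall>i j. i \<notin> Z \<and> j \<notin> Z \<longrightarrow> A i j = 0}"

definition wedge :: "('b,'k::comm_ring_1) vec \<Rightarrow> ('b,'k) vec \<Rightarrow> ('b,'k) vec2" where
  "wedge x y = (\<lambda>i j. x i * y j - x j * y i)"

text \<open>Adjoint action on Lambda^2 n, the linear extension of
  ad_x (a wedge b) = [x,a] wedge b + a wedge [x,b].\<close>
definition ad2 :: "('b::finite,'k::comm_ring_1) vec3 \<Rightarrow> ('b,'k) vec \<Rightarrow> ('b,'k) vec2 \<Rightarrow> ('b,'k) vec2" where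
  "ad2 C x A = (\<lambda>i j. (\<Sum>k\<in>UNIV. br C x (ebas k) i * A k j) + (\<Sum>k\<in>UNIV. br C x (ebas k) j * A i k))"

definition inv2 :: "('b::finite,'k::comm_ring_1) vec3 \<Rightarrow> ('b,'k) vec2 set" where
  "inv2 C = {A \<in> Lam2. \<forall>x. ad2 C x A = 0}"

text \<open>T_i : W \<rightarrow> W^*, T_i(v)(w) = i-th z-coordinate of [v,w]; an element f of W^* is
  represented by its values f(e_b) on the basis of W (b \<notin> Z).\<close>
definition Tmap :: "('b::finite,'k::comm_ring_1) vec3 \<Rightarrow> 'b set \<Rightarrow> 'b \<Rightarrow> ('b,'k) vec \<Rightarrow> ('b,'k) vec" where
  "Tmap C Z i v = (\<lambda>b. if b \<in> Z then 0 else br C v (ebas b) i)"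

text \<open>A linear map S : W^* \<rightarrow> W given by its matrix (entries indexed by W-basis indices).\<close>
definition Smap :: "'b set \<Rightarrow> ('b,'k::comm_ring_1) vec2 \<Rightarrow> ('b,'k) vec \<Rightarrow> ('b,'k) vec" where
  "Smap Z S f = (\<lambda>a. if a \<in> Z then 0 else (\<Sum>b\<in>-Z. S a b * f b))"

definition TST_type :: "('b::finite,'k::comm_ring_1) vec3 \<Rightarrow> 'b set \<Rightarrow> bool" where
  "TST_type C Z \<longleftrightarrow> (\<forall>S. (\<forall>i\<in>Z. \<forall>k\<in>Z. \<forall>v\<in>Wsp Z.
        Tmap C Z i (Smap Z S (Tmap C Z k v)) + Tmap C Z k (Smap Z S (Tmap C Z i v)) = 0)
      \<longrightarrow> (\<forall>a b. a \<notin> Z \<longrightarrow> b \<notin> Z \<longrightarrow> S a b = 0))"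

text \<open>A linear map delta : n \<rightarrow> Lambda^2 n given by delta(e_k) = D k.\<close>
definition cob :: "('b::finite,'k::comm_ring_1) vec3 \<Rightarrow> ('b,'k) vec \<Rightarrow> ('b,'k) vec2" where
  "cob D x = (\<lambda>i j. \<Sum>k\<in>UNIV. x k * D k i j)"

text \<open>Wedge products Lambda^2 x Lambda^1 \<rightarrow> Lambda^3 and Lambda^1 x Lambda^2 \<rightarrow> Lambda^3
  (alternating coefficient arrays, consistent with the convention for wedge).\<close>
definition wedge21 :: "('b,'k::comm_ring_1) vec2 \<Rightarrow> ('b,'k) vec \<Rightarrow> ('b,'k) vec3" where
  "wedge21 A x = (\<lambda>p q r. A p q * x r + A q r * x p + A r p * x q)"

definition wedge12 :: "('b,'k::comm_ring_1) vec \<Rightarrow> ('b,'k) vec2 \<Rightarrow> ('b,'k) vec3" where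
  "wedge12 x A = (\<lambda>p q r. x p * A q r + x q * A r p + x r * A p q)"

text \<open>The extension Lambda^2 n \<rightarrow> Lambda^3 n, (x1 wedge x2) \<mapsto> delta(x1) wedge x2 - x1 wedge delta(x2),
  applied to A = sum_{i,j} A i j e_i tensor e_j = (1/2) sum_{i,j} A i j e_i wedge e_j.\<close>
definition dext :: "('b::finite,'k::field) vec3 \<Rightarrow> ('b,'k) vec2 \<Rightarrow> ('b,'k) vec3" where
  "dext D A = (\<lambda>p q r. (\<Sum>i\<in>UNIV. \<Sum>j\<in>UNIV. A i j / 2 *
      (wedge21 (cob D (ebas i)) (ebas j) p q r - wedge12 (ebas i) (cob D (ebas j)) p q r)))"

definition lie_bialg_cobracket :: "('b::finite,'k::field) vec3 \<Rightarrow> ('b,'k) vec3 \<Rightarrow> bool" where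
  "lie_bialg_cobracket C D \<longleftrightarrow>
     (\<forall>x. cob D x \<in> Lam2) \<and>
     (\<forall>x. dext D (cob D x) = 0) \<and>
     (\<forall>x y. cob D (br C x y) = ad2 C x (cob D y) - ad2 C y (cob D x))"

end

theory Submission
  imports Defs
begin

lemma br_add_left: "br C (x + y) z = br C x z + br C y z"
  unfolding br_def by (rule ext) (simp add: algebra_simps sum.distrib)

lemma br_add_right: "br C z (x + y) = br C z x + br C z y"
  unfolding br_def by (rule ext) (simp add: algebra_simps sum.distrib)

lemma br_anti:
  assumes "is_lie C" shows "br C x y = - br C y x"
proof -
  have "br C (x+y) (x+y) = 0" "br C x x = 0" "br C y y = 0" using assms unfolding is_lie_def by auto
  then have "br C x y + br C y x = 0"
    by (simp add: br_add_left br_add_right add.commute)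
  then show ?thesis by (simp add: eq_neg_iff_add_eq_0)
qed

lemma br_expand_right:
  "br C u y i = (\<Sum>b\<in>UNIV. y b * br C u (ebas b) i)"
proof -
  have "br C u (ebas b) i = (\<Sum>a\<in>UNIV. u a * C a b i)" for b
  proof -
    have "(\<Sum>ba\<in>UNIV. u a * ebas b ba * C a ba i) = u a * C a b i" for a
    proof -
      have "(\<Sum>ba\<in>UNIV. u a * ebas b ba * C a ba i) = (\<Sum>ba\<in>UNIV. if ba = b then u a * C a ba i else 0)"
        unfolding ebas_def by (rule sum.cong) auto
      then show ?thesis by (simp add: sum.delta')
    qed
    then show ?thesis unfolding br_def by simp
  qed
  then have "(\<Sum>b\<in>UNIV. y b * br C u (ebas b) i) = (\<Sum>b\<in>UNIV. \<Sum>a\<in>UNIV. y b * (u a * C a b i))"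
    by (simp add: sum_distrib_left)
  also have "\<dots> = (\<Sum>a\<in>UNIV. \<Sum>b\<in>UNIV. u a * y b * C a b i)"
    by (subst sum.swap) (simp add: algebra_simps)
  finally show ?thesis unfolding br_def by simp
qed

lemma cob_zero: "cob D 0 = 0"
  unfolding cob_def by (auto simp: fun_eq_iff)

lemma ebas_zsp: "a \<in> Z \<Longrightarrow> ebas a \<in> zsp Z"
  unfolding zsp_def ebas_def by auto

theorem mainTheorem5:
  fixes C D :: "('b::finite, 'k::field_char_0) vec3" and Z :: "'b set"
  assumes "is_lie C"
    and "two_step C"
    and "center C = zsp Z"
    and "TST_type C Z"
    and "inv2 C = Lam2z Z"
    and "lie_bialg_cobracket C D"
  shows "(\<forall>x \<in> zsp Z. cob D x \<in> Lam2z Z) \<and> (\<forall>x \<in> Wsp Z. cob D x \<in> WZ_Lam2z Z)"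
proof -
  have lie: "is_lie C" by fact
  have lam: "\<And>x. cob D x \<in> Lam2" and cocyc: "\<And>x y. cob D (br C x y) = ad2 C x (cob D y) - ad2 C y (cob D x)"
    using assms(6) unfolding lie_bialg_cobracket_def by auto
  have cen: "\<And>x y. x \<in> zsp Z \<Longrightarrow> br C x y = 0"
    using assms(3) unfolding center_def by auto
  have Lz: "br C u (ebas a) i = 0" if "a \<in> Z" for u a i
  proof -
    have "br C (ebas a) u = 0" using cen ebas_zsp[OF that] by blast
    then show ?thesis using br_anti[OF lie, of u "ebas a"] by simp
  qed
  have brZ: "br C u w c = 0" if "c \<notin> Z" for u w c
  proof -
    have "br C u w \<in> center C" using assms(2) unfolding two_step_def center_def by auto
    then show ?thesis using assms(3) that unfolding zsp_def by auto
  qed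
  have part1: "cob D x \<in> Lam2z Z" if "x \<in> zsp Z" for x
  proof -
    have "ad2 C y (cob D x) = 0" for y
    proof -
      have "br C x y = 0" using cen that by blast
      moreover have "ad2 C x A = 0" for A
        unfolding ad2_def using cen[OF that] by (simp add: fun_eq_iff)
      ultimately show ?thesis using cocyc[of x y] by (simp add: cob_zero)
    qed
    then have "cob D x \<in> inv2 C" using lam unfolding inv2_def by auto
    then show ?thesis using assms(5) by simp
  qed
  define L where "L i u a = br C u (ebas a) i" for i u a
  have LZ: "L i u a = 0" if "a \<in> Z" for i u a using Lz that unfolding L_def by blast
  have E: "(\<Sum>a\<in>UNIV. L i u a * cob D w a c) = (\<Sum>a\<in>UNIV. L i w a * cob D u a c)"
    if "i \<in> Z" "c \<notin> Z" for i u w c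
  proof -
    have "br C u w \<in> zsp Z" using assms(2,3) unfolding two_step_def center_def by auto
    then have "cob D (br C u w) i c = 0" using part1 that unfolding Lam2z_def by auto
    moreover have "ad2 C v A i c = (\<Sum>a\<in>UNIV. L i v a * A a c)" for v A
      unfolding ad2_def L_def using brZ[OF that(2)] by simp
    ultimately show ?thesis using fun_cong[OF fun_cong[OF cocyc[of u w], of i], of c] by simp
  qed
  define h where "h i k u v w = (\<Sum>a\<in>UNIV. \<Sum>c\<in>UNIV. L i u a * cob D w a c * L k v c)" for i k u v w
  have h13: "h i k u v w = h i k w v u" if "i \<in> Z" for i k u v w
  proof -
    have "h i k u v w = (\<Sum>c\<in>UNIV. (\<Sum>a\<in>UNIV. L i u a * cob D w a c) * L k v c)"
      unfolding h_def by (subst sum.swap) (simp add: sum_distrib_right)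
    also have "\<dots> = (\<Sum>c\<in>UNIV. (\<Sum>a\<in>UNIV. L i w a * cob D u a c) * L k v c)"
    proof (rule sum.cong)
      fix c
      show "(\<Sum>a\<in>UNIV. L i u a * cob D w a c) * L k v c = (\<Sum>a\<in>UNIV. L i w a * cob D u a c) * L k v c"
      proof (cases "c \<in> Z")
        case True then show ?thesis by (simp add: LZ)
      next
        case False then show ?thesis using E[OF that False, of u w] by simp
      qed
    qed simp
    also have "\<dots> = h i k w v u"
      unfolding h_def by (subst sum.swap) (simp add: sum_distrib_right)
    finally show ?thesis .
  qed
  have hanti: "h i k u v w = - h k i v u w" for i k u v w
  proof -
    have as: "cob D w a c = - cob D w c a" for a c using lam[of w] unfolding Lam2_def by blast
    have "h k i v u w = (\<Sum>c\<in>UNIV. \<Sum>a\<in>UNIV. L k v c * cob D w c a * L i u a)"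
      unfolding h_def by simp
    also have "\<dots> = (\<Sum>a\<in>UNIV. \<Sum>c\<in>UNIV. - (L i u a * cob D w a c * L k v c))"
    proof (subst sum.swap, intro sum.cong refl)
      fix a c
      show "L k v c * cob D w c a * L i u a = - (L i u a * cob D w a c * L k v c)"
        unfolding as[of c a] by (simp add: algebra_simps)
    qed
    also have "\<dots> = - h i k u v w" unfolding h_def by (simp add: sum_negf)
    finally show ?thesis by simp
  qed
  have PQ: "h i k u v w + h k i u v w = 0" if "i \<in> Z" "k \<in> Z" for i k u v w
  proof -
    have "h i k u v w = h i k w v u" using h13 that by blast
    also have "\<dots> = - h k i v w u" using hanti by blast
    also have "\<dots> = - h k i u w v" using h13[of k i v w u] that by simp
    also have "\<dots> = h i k w u v" using hanti[of i k w u v] by simp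
    also have "\<dots> = h i k v u w" using h13 that by blast
    also have "\<dots> = - h k i u v w" using hanti by blast
    finally show ?thesis by simp
  qed
  have part2: "cob D x \<in> WZ_Lam2z Z" for x
  proof -
    let ?S = "cob D x"
    have cond: "Tmap C Z i (Smap Z ?S (Tmap C Z k v)) + Tmap C Z k (Smap Z ?S (Tmap C Z i v)) = 0"
      if "i \<in> Z" "k \<in> Z" for i k v
    proof -
      have T: "Tmap C Z i (Smap Z ?S (Tmap C Z k v)) b = (if b \<in> Z then 0 else - h i k (ebas b) v x)"
        for i k b
      proof (cases "b \<in> Z")
        case True then show ?thesis unfolding Tmap_def by simp
      next
        case False
        let ?y = "Smap Z ?S (Tmap C Z k v)"
        have y: "?y a = (if a \<in> Z then 0 else (\<Sum>c\<in>UNIV. ?S a c * L k v c))" for a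
        proof -
          have "(\<Sum>c\<in>-Z. ?S a c * Tmap C Z k v c) = (\<Sum>c\<in>-Z. ?S a c * L k v c)"
            unfolding Tmap_def L_def by (rule sum.cong) auto
          also have "\<dots> = (\<Sum>c\<in>UNIV. ?S a c * L k v c)"
            by (rule sum.mono_neutral_left) (auto simp: LZ)
          finally show ?thesis unfolding Smap_def by simp
        qed
        have "br C ?y (ebas b) i = - br C (ebas b) ?y i" using br_anti[OF lie] by (metis uminus_apply)
        also have "br C (ebas b) ?y i = (\<Sum>a\<in>UNIV. ?y a * L i (ebas b) a)"
          unfolding L_def by (rule br_expand_right)
        also have "\<dots> = (\<Sum>a\<in>UNIV. (\<Sum>c\<in>UNIV. ?S a c * L k v c) * L i (ebas b) a)"
          by (rule sum.cong) (auto simp: y LZ)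
        also have "\<dots> = h i k (ebas b) v x"
          unfolding h_def by (simp add: sum_distrib_right sum_distrib_left mult.commute mult.left_commute)
        finally show ?thesis using False unfolding Tmap_def by simp
      qed
      show ?thesis
      proof (rule ext)
        fix b
        show "(Tmap C Z i (Smap Z ?S (Tmap C Z k v)) + Tmap C Z k (Smap Z ?S (Tmap C Z i v))) b = 0 b"
          using PQ[OF that, of "ebas b" v x] by (simp add: T) (metis add.commute add_eq_0_iff)
      qed
    qed
    then have "\<forall>a b. a \<notin> Z \<longrightarrow> b \<notin> Z \<longrightarrow> ?S a b = 0"
      using assms(4) unfolding TST_type_def by blast
    then show ?thesis using lam[of x] unfolding WZ_Lam2z_def by auto
  qed
  show ?thesis using part1 part2 by blast
qed

end
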